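(* Let $a,b\in\mathbb{R}^n$ with $a\ll b$ and let $X=[a,b]=\{z\in\mathbb{R}^n: a\le z\le b\}$. Let $\{B_i\}_{i\in\mathbb{N}}$ be a sequence of experiments in $X$ (as in the context) and let $\succeq^*$ be a continuous preference on $X$. Then for each $k\in\mathbb{N}$ there exists a continuous preference $\succeq_k$ on $X$ that strongly rationalizes the choice function of order $k$ generated by $\succeq^*$, such that $\succeq_k\to X\times X$ (the relation of complete indifference) in the topology of closed convergence.
   Context: For $x,y\in\mathbb{R}^n$, $x\ge y$ means $x_i\ge y_i$ for all $i$ and $x\gg y$ means $x_i>y_i$ for all $i$. A preference on $X$ is a complete and transitive binary relation $\succeq\subseteq X\times X$; it is continuous if it is a closed subset of $X\times X$. A sequence of experiments is a sequence $\{B_i\}_{i\in\mathbb{N}}$ of unordered pairs $B_i=\{x_i,y_i\}\subseteq X$ such that $B=\bigcup_i B_i$ is dense in $X$ and for all $x,y\in B$ there is $k$ with $B_k=\{x,y\}$; set $\Sigma_k=\{B_1,\dots,B_k\}$. For a preference $\succeq$ and a finite set $A$, $c_{\succeq}(A)=\{x\in A: x\succeq y \text{ for all } y\in A\}$. The choice function of order $k$ generated by $\succeq^*$ is the map $B_i\mapsto c_{\succeq^*}(B_i)$ on $\Sigma_k$. A preference $\succeq_k$ strongly rationalizes a choice function $c$ on $\Sigma_k$ if $c(B_i)=c_{\succeq_k}(B_i)$ for all $B_i\in\Sigma_k$. Topology of closed convergence on closed subsets of $X\times X$: for a sequence $\mathcal{F}=\{F^n\}$ of closed sets, $\mathrm{Li}(\mathcal{F})$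 is the set of $(x,y)$ such that every neighborhood $V$ of $(x,y)$ meets $F^n$ for all sufficiently large $n$, and $\mathrm{Ls}(\mathcal{F})$ is the set of $(x,y)$ such that every neighborhood $V$ of $(x,y)$ meets $F^n$ for infinitely many $n$; $F^n\to F$ iff $\mathrm{Li}(\mathcal{F})=F=\mathrm{Ls}(\mathcal{F})$. *)

theory Defs
  imports "HOL-Analysis.Analysis"
begin

definition box_cc :: "real^'n \<Rightarrow> real^'n \<Rightarrow> (real^'n) set" where
  "box_cc a b = {z. \<forall>i. a $ i \<le> z $ i \<and> z $ i \<le> b $ i}"

definition preference :: "'a set \<Rightarrow> ('a \<times> 'a) set \<Rightarrow> bool" where
  "preference X R \<longleftrightarrow> R \<subseteq> X \<times> X
     \<and> (\<forall>x\<in>X. \<forall>y\<in>X. (x, y) \<in> R \<or> (y, x) \<in> R)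
     \<and> trans R"

definition continuous_pref :: "'a::topological_space set \<Rightarrow> ('a \<times> 'a) set \<Rightarrow> bool" where
  "continuous_pref X R \<longleftrightarrow> preference X R \<and> closedin (top_of_set (X \<times> X)) R"

definition experiments :: "'a::topological_space set \<Rightarrow> (nat \<Rightarrow> 'a set) \<Rightarrow> bool" where
  "experiments X B \<longleftrightarrow>
     (\<forall>i. \<exists>x y. B i = {x, y} \<and> x \<in> X \<and> y \<in> X)
     \<and> X \<subseteq> closure (\<Union>(range B))
     \<and> (\<forall>x\<in>\<Union>(range B). \<forall>y\<in>\<Union>(range B). \<exists>k. B k = {x, y})"

definition choice :: "('a \<times> 'a) set \<Rightarrow> 'a set \<Rightarrow> 'a set" where
  "choice R A = {x \<in> A. \<forall>y\<in>A. (x, y) \<in> R}"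

text \<open>R strongly rationalizes the choice function of order k generated by S,
  where Sigma_k consists of the first k experiments B 0, ..., B (k-1).\<close>
definition strongly_rationalizes :: "('a \<times> 'a) set \<Rightarrow> nat \<Rightarrow> (nat \<Rightarrow> 'a set) \<Rightarrow> ('a \<times> 'a) set \<Rightarrow> bool" where
  "strongly_rationalizes R k B S \<longleftrightarrow> (\<forall>i<k. choice R (B i) = choice S (B i))"

definition Li :: "(nat \<Rightarrow> 'a::topological_space set) \<Rightarrow> 'a set" where
  "Li F = {p. \<forall>V. open V \<and> p \<in> V \<longrightarrow> (\<forall>\<^sub>F n in sequentially. F n \<inter> V \<noteq> {})}"

definition Ls :: "(nat \<Rightarrow> 'a::topological_space set) \<Rightarrow> 'a set" where
  "Ls F = {p. \<forall>V. open V \<and> p \<in> V \<longrightarrow> (\<exists>\<^sub>F n in sequentially. F n \<inter> V \<noteq> {})}"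

definition closed_converges :: "(nat \<Rightarrow> 'a::topological_space set) \<Rightarrow> 'a set \<Rightarrow> bool" where
  "closed_converges F A \<longleftrightarrow> Li F = A \<and> Ls F = A"

end

theory Submission
  imports Defs
begin

lemma net_avoid:
  fixes X :: "'a::metric_space set"
  assumes "compact X" "\<forall>c\<in>X. c islimpt X" "finite F" "d > 0"
  shows "\<exists>G. finite G \<and> G \<subseteq> X - F \<and> (\<forall>x\<in>X. \<exists>g\<in>G. dist x g < d)"
proof -
  have cov: "X \<subseteq> (\<Union>c\<in>X. ball c (d/2))"
  proof
    fix x assume x: "x \<in> X"
    have "x \<in> ball x (d/2)" using assms(4) by simp
    then show "x \<in> (\<Union>c\<in>X. ball c (d/2))" using x by (rule UN_I[rotated])
  qed
  obtain C where C: "C \<subseteq> X" "finite C" "X \<subseteq> (\<Union>c\<in>C. ball c (d/2))"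
    by (rule compactE_image[OF assms(1) open_ball cov])
  have C: "finite C" "C \<subseteq> X" "X \<subseteq> (\<Union>c\<in>C. ball c (d/2))" using C by auto
  have "\<forall>c\<in>C. \<exists>g. g \<in> X - F \<and> dist c g < d/2"
  proof
    fix c assume "c \<in> C"
    then have "c islimpt X" using C assms(2) by blast
    then have inf: "\<forall>e>0. infinite (X \<inter> ball c e)" by (simp add: islimpt_eq_infinite_ball)
    have "d/2 > 0" using assms(4) by simp
    then have "infinite (X \<inter> ball c (d/2))" using inf by blast
    then have "\<not> (X \<inter> ball c (d/2) \<subseteq> F)" using assms(3) finite_subset by metis
    then have "X \<inter> ball c (d/2) - F \<noteq> {}" by blast
    then show "\<exists>g. g \<in> X - F \<and> dist c g < d/2" by auto
  qed
  from bchoice[OF this] obtain g where g0: "\<forall>c\<in>C. g c \<in> X - F \<and> dist c (g c) < d/2" by blast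
  then have g: "\<And>c. c \<in> C \<Longrightarrow> g c \<in> X - F \<and> dist c (g c) < d/2" by blast
  show ?thesis
  proof (intro exI[of _ "g ` C"] conjI)
    show "finite (g ` C)" using C by auto
    show "g ` C \<subseteq> X - F" using g by auto
    show "\<forall>x\<in>X. \<exists>y\<in>g ` C. dist x y < d"
    proof
      fix x assume "x \<in> X"
      then obtain c where c0: "c \<in> C" "x \<in> ball c (d/2)" using C(3) by blast
      then have c: "c \<in> C" "dist c x < d/2" by auto
      then have "dist x (g c) < d" using g[OF c(1)] dist_triangle[of x "g c" c]
        by (simp add: dist_commute)
      then show "\<exists>y\<in>g ` C. dist x y < d" using c by auto
    qed
  qed
qed

lemma construct:
  fixes X :: "'a::metric_space set"
  assumes "compact X" "\<forall>c\<in>X. c islimpt X" "finite F" "F \<subseteq> X" "d > 0"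
    and "preference X S"
  shows "\<exists>R. continuous_pref X R \<and> (\<forall>x\<in>F. \<forall>y\<in>F. (x,y)\<in>R \<longleftrightarrow> (x,y)\<in>S)
            \<and> (\<forall>x\<in>X. \<forall>y\<in>X. \<exists>x'\<in>X. dist x x' < d \<and> (x',y)\<in>R)"
proof -
  obtain G where G: "finite G" "G \<subseteq> X - F" "\<forall>x\<in>X. \<exists>g\<in>G. dist x g < d"
    using net_avoid[OF assms(1,2,3,5)] by blast
  have SX: "S \<subseteq> X \<times> X" and Scomp: "\<forall>x\<in>X. \<forall>y\<in>X. (x, y) \<in> S \<or> (y, x) \<in> S"
    and Strans: "trans S" using assms(6) unfolding preference_def by auto
  define H where "H = F \<union> G"
  have Hfin: "finite H" using G assms(3) H_def by auto
  define D where "D = insert 1 ((\<lambda>(p,q). dist p q) ` {(p,q). p \<in> H \<and> q \<in> H \<and> p \<noteq> q})"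
  define r where "r = Min D"
  have sub: "{(p,q). p \<in> H \<and> q \<in> H \<and> p \<noteq> q} \<subseteq> H \<times> H" by auto
  have Dfin: "finite D" unfolding D_def
    using finite_subset[OF sub] Hfin by simp
  have Dne: "D \<noteq> {}" unfolding D_def by simp
  have Dpos: "\<forall>a\<in>D. 0 < a" unfolding D_def by auto
  have rpos: "r > 0" unfolding r_def using Min_gr_iff[OF Dfin Dne] Dpos by blast
  have rle: "r \<le> dist p q" if "p \<in> H" "q \<in> H" "p \<noteq> q" for p q
  proof -
    have "dist p q \<in> D" unfolding D_def
      by (rule insertI2, rule image_eqI[where x="(p,q)"]) (use that in auto)
    then show ?thesis unfolding r_def using Min_le[OF Dfin] by blast
  qed
  define u where "u p = real (card {q\<in>F. (p,q)\<in>S})" for p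
  define M where "M = real (card F)"
  have uM: "u p \<le> M" for p unfolding u_def M_def using assms(3) by (simp add: card_mono)
  have uS: "(x,y) \<in> S \<longleftrightarrow> u y \<le> u x" if "x \<in> F" "y \<in> F" for x y
  proof
    assume xy: "(x,y) \<in> S"
    have "{q\<in>F. (y,q)\<in>S} \<subseteq> {q\<in>F. (x,q)\<in>S}" using xy Strans by (auto dest: transD)
    then show "u y \<le> u x" unfolding u_def using assms(3) by (simp add: card_mono)
  next
    assume le: "u y \<le> u x"
    show "(x,y) \<in> S"
    proof (rule ccontr)
      assume nxy: "(x,y) \<notin> S"
      then have yx: "(y,x) \<in> S" using Scomp that assms(4) by blast
      have yy: "(y,y) \<in> S" using Scomp that assms(4) by blast
      have sub: "{q\<in>F. (x,q)\<in>S} \<subseteq> {q\<in>F. (y,q)\<in>S}" using yx Strans by (auto dest: transD)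
      have "y \<in> {q\<in>F. (y,q)\<in>S} - {q\<in>F. (x,q)\<in>S}" using yy nxy that by auto
      then have "{q\<in>F. (x,q)\<in>S} \<subset> {q\<in>F. (y,q)\<in>S}" using sub by blast
      then have "card {q\<in>F. (x,q)\<in>S} < card {q\<in>F. (y,q)\<in>S}"
        using assms(3) by (intro psubset_card_mono) auto
      then show False using le unfolding u_def by simp
    qed
  qed
  define w where "w z = M - (\<Sum>p\<in>F. (M - u p) * max 0 (1 - dist z p / r))" for z
  have wcont: "continuous_on UNIV w" unfolding w_def
    using rpos by (intro continuous_intros) auto
  have wle: "w z \<le> M" for z unfolding w_def
    using uM by (auto intro!: sum_nonneg mult_nonneg_nonneg)
  have zero_far: "max 0 (1 - dist z p / r) = 0" if "r \<le> dist z p" for z p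
    using that rpos by (auto simp: field_simps)
  have wF: "w q = u q" if "q \<in> F" for q
  proof -
    have e1: "(\<Sum>p\<in>F. (M - u p) * max 0 (1 - dist q p / r))
        = (M - u q) * max 0 (1 - dist q q / r) + (\<Sum>p\<in>F-{q}. (M - u p) * max 0 (1 - dist q p / r))"
      using that assms(3) by (simp add: sum.remove)
    have e2: "(\<Sum>p\<in>F-{q}. (M - u p) * max 0 (1 - dist q p / r)) = 0"
    proof (intro sum.neutral ballI)
      fix p assume p: "p \<in> F - {q}"
      have rq: "r \<le> dist q p" using p that by (intro rle[of q p]) (auto simp: H_def)
      then show "(M - u p) * max 0 (1 - dist q p / r) = 0" using zero_far[OF rq] by simp
    qed
    show ?thesis unfolding w_def e1 e2 by simp
  qed
  have wG: "w g = M" if "g \<in> G" for g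
  proof -
    have "(\<Sum>p\<in>F. (M - u p) * max 0 (1 - dist g p / r)) = 0"
    proof (intro sum.neutral ballI)
      fix p assume p: "p \<in> F"
      have "g \<noteq> p" using p that G(2) by auto
      then have rq: "r \<le> dist g p" using p that by (intro rle[of g p]) (auto simp: H_def)
      then show "(M - u p) * max 0 (1 - dist g p / r) = 0" using zero_far[OF rq] by simp
    qed
    then show ?thesis unfolding w_def by simp
  qed
  define R where "R = {(z,z'). z \<in> X \<and> z' \<in> X \<and> w z' \<le> w z}"
  have pref: "preference X R" unfolding preference_def
  proof (intro conjI ballI)
    show "R \<subseteq> X \<times> X" unfolding R_def by auto
    fix x y assume "x \<in> X" "y \<in> X"
    then show "(x, y) \<in> R \<or> (y, x) \<in> R" unfolding R_def by auto
  next
    show "trans R" unfolding R_def by (rule transI) auto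
  qed
  have "R = (X \<times> X) \<inter> (\<lambda>p. w (fst p) - w (snd p)) -` {0..}"
    unfolding R_def by auto
  moreover have "closedin (top_of_set (X \<times> X)) ((X \<times> X) \<inter> (\<lambda>p. w (fst p) - w (snd p)) -` {0..})"
  proof (rule continuous_closedin_preimage)
    have c1: "continuous_on (X \<times> X) (\<lambda>p. w (fst p))"
      by (rule continuous_on_compose2[OF wcont continuous_on_fst[OF continuous_on_id]]) auto
    have c2: "continuous_on (X \<times> X) (\<lambda>p. w (snd p))"
      by (rule continuous_on_compose2[OF wcont continuous_on_snd[OF continuous_on_id]]) auto
    show "continuous_on (X \<times> X) (\<lambda>p. w (fst p) - w (snd p))"
      by (rule continuous_on_diff[OF c1 c2])
    show "closed {0::real..}" by simp
  qed
  ultimately have "continuous_pref X R" using pref unfolding continuous_pref_def by simp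
  moreover have "\<forall>x\<in>F. \<forall>y\<in>F. (x,y)\<in>R \<longleftrightarrow> (x,y)\<in>S"
  proof (intro ballI)
    fix x y assume xy: "x \<in> F" "y \<in> F"
    then have "x \<in> X" "y \<in> X" using assms(4) by auto
    then have "(x,y) \<in> R \<longleftrightarrow> w y \<le> w x" unfolding R_def by simp
    also have "\<dots> \<longleftrightarrow> u y \<le> u x" using wF xy by simp
    also have "\<dots> \<longleftrightarrow> (x,y) \<in> S" using uS[OF xy] by simp
    finally show "(x,y)\<in>R \<longleftrightarrow> (x,y)\<in>S" .
  qed
  moreover have "\<forall>x\<in>X. \<forall>y\<in>X. \<exists>x'\<in>X. dist x x' < d \<and> (x',y)\<in>R"
  proof (intro ballI)
    fix x y assume xy: "x \<in> X" "y \<in> X"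
    then obtain g where g: "g \<in> G" "dist x g < d" using G(3) by blast
    then have "g \<in> X" using G(2) by auto
    have gy: "(g, y) \<in> R" using \<open>g \<in> X\<close> xy wG[OF g(1)] wle[of y] unfolding R_def by simp
    show "\<exists>x'\<in>X. dist x x' < d \<and> (x',y)\<in>R"
      using gy g(2) \<open>g \<in> X\<close> by blast
  qed
  ultimately show ?thesis by (intro exI[of _ R] conjI) assumption+
qed


lemma Li_sub_Ls: "Li F \<subseteq> Ls F"
  unfolding Li_def Ls_def by (auto intro: eventually_frequently)

theorem proposition1:
  fixes a b :: "real^'n" and B :: "nat \<Rightarrow> (real^'n) set"
    and S :: "((real^'n) \<times> (real^'n)) set"
  assumes "\<forall>i. a $ i < b $ i"
    and "experiments (box_cc a b) B"
    and "continuous_pref (box_cc a b) S"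
  shows "\<exists>R :: nat \<Rightarrow> ((real^'n) \<times> (real^'n)) set.
           (\<forall>k. continuous_pref (box_cc a b) (R k) \<and> strongly_rationalizes (R k) k B S)
           \<and> closed_converges R (box_cc a b \<times> box_cc a b)"
proof -
  define X where "X = box_cc a b"
  have Xc: "X = cbox a b" unfolding X_def box_cc_def by (simp add: interval_cart)
  have cX: "compact X" unfolding Xc by (rule compact_cbox)
  have clX: "closed X" unfolding Xc by (rule closed_cbox)
  have conX: "connected X" unfolding Xc by (rule convex_connected[OF convex_box(1)])
  have aX: "a \<in> X" and bX: "b \<in> X" unfolding X_def box_cc_def using assms(1) by (auto intro: less_imp_le)
  have ab: "a \<noteq> b" using assms(1) by (metis less_irrefl)
  have ns: "\<And>x. X \<noteq> {x}" using aX bX ab by blast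
  have perf: "\<forall>c\<in>X. c islimpt X" using connected_imp_perfect[OF conX _ ns] by blast
  have prefS: "preference X S" using assms(3) unfolding continuous_pref_def X_def by blast
  have Bx: "\<forall>i. \<exists>x y. B i = {x, y} \<and> x \<in> X \<and> y \<in> X" using assms(2) unfolding experiments_def X_def by blast
  define F where "F k = \<Union>(B ` {..<k})" for k
  have Ffin: "finite (F k)" for k
  proof -
    have "finite (B i)" for i using Bx by (metis finite.emptyI finite_insert)
    then show ?thesis unfolding F_def by simp
  qed
  have BX: "B i \<subseteq> X" for i
  proof -
    obtain x y where "B i = {x,y}" "x \<in> X" "y \<in> X" using Bx by blast
    then show ?thesis by simp
  qed
  have FX: "F k \<subseteq> X" for k unfolding F_def using BX by blast
  have "\<forall>k. \<exists>R. continuous_pref X R \<and> (\<forall>x\<in>F k. \<forall>y\<in>F k. (x,y)\<in>R \<longleftrightarrow> (x,y)\<in>S)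
            \<and> (\<forall>x\<in>X. \<forall>y\<in>X. \<exists>x'\<in>X. dist x x' < 1 / real (Suc k) \<and> (x',y)\<in>R)"
  proof
    fix k
    show "\<exists>R. continuous_pref X R \<and> (\<forall>x\<in>F k. \<forall>y\<in>F k. (x,y)\<in>R \<longleftrightarrow> (x,y)\<in>S)
            \<and> (\<forall>x\<in>X. \<forall>y\<in>X. \<exists>x'\<in>X. dist x x' < 1 / real (Suc k) \<and> (x',y)\<in>R)"
      by (rule construct[OF cX perf Ffin FX _ prefS]) simp
  qed
  then obtain R where R: "\<And>k. continuous_pref X (R k)"
    "\<And>k. \<forall>x\<in>F k. \<forall>y\<in>F k. (x,y)\<in>R k \<longleftrightarrow> (x,y)\<in>S"
    "\<And>k. \<forall>x\<in>X. \<forall>y\<in>X. \<exists>x'\<in>X. dist x x' < 1 / real (Suc k) \<and> (x',y)\<in>R k"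
    by metis
  have RX: "R k \<subseteq> X \<times> X" for k using R(1)[of k] unfolding continuous_pref_def preference_def by blast
  have sr: "strongly_rationalizes (R k) k B S" for k
    unfolding strongly_rationalizes_def
  proof (intro allI impI)
    fix i assume "i < k"
    then have sub: "B i \<subseteq> F k" unfolding F_def by blast
    show "choice (R k) (B i) = choice S (B i)"
      unfolding choice_def using sub R(2)[of k] by blast
  qed
  have sub1: "X \<times> X \<subseteq> Li R"
  proof
    fix p assume p: "p \<in> X \<times> X"
    then obtain x y where xy: "p = (x,y)" "x \<in> X" "y \<in> X" by blast
    show "p \<in> Li R" unfolding Li_def
    proof (intro CollectI allI impI)
      fix V assume V: "open V \<and> p \<in> V"
      then obtain e where e: "e > 0" "ball p e \<subseteq> V" using open_contains_ball by blast
      obtain N where N: "1 / real (Suc N) < e" using e(1) by (metis nat_approx_posE)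
      show "\<forall>\<^sub>F n in sequentially. R n \<inter> V \<noteq> {}"
      proof (rule eventually_sequentiallyI[of N])
        fix n assume n: "N \<le> n"
        obtain x' where x': "x' \<in> X" "dist x x' < 1 / real (Suc n)" "(x',y) \<in> R n"
          using R(3)[of n] xy by blast
        have "1 / real (Suc n) \<le> 1 / real (Suc N)" using n by (simp add: frac_le)
        then have "dist x x' < e" using x'(2) N by linarith
        then have "(x',y) \<in> ball p e" using xy(1) by (simp add: dist_Pair_Pair dist_commute)
        then show "R n \<inter> V \<noteq> {}" using x'(3) e(2) by blast
      qed
    qed
  qed
  have sub2: "Ls R \<subseteq> X \<times> X"
  proof
    fix p assume p: "p \<in> Ls R"
    show "p \<in> X \<times> X"
    proof (rule ccontr)
      assume np: "p \<notin> X \<times> X"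
      have "open (- (X \<times> X))" using closed_Times[OF clX clX] by (simp add: open_Compl)
      then have "\<exists>\<^sub>F n in sequentially. R n \<inter> (- (X \<times> X)) \<noteq> {}"
        using p np unfolding Ls_def by blast
      moreover have "R n \<inter> (- (X \<times> X)) = {}" for n using RX[of n] by blast
      ultimately show False by simp
    qed
  qed
  have "closed_converges R (X \<times> X)"
    unfolding closed_converges_def using sub1 sub2 Li_sub_Ls[of R] by blast
  then show ?thesis using R(1) sr unfolding X_def by blast
qed

end
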